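(* Assume $\alpha\neq0$ and $w=\tfrac12(s+t)\notin\mathbb{Z}$. Then for every positive integer $n$, every $u\in\mathbb{C}$ and all $a,c\in\mathbb{Z}$, each of the two sets $$\{\psi^{(n)}(u)^a_b\}_{b\in\{a-n+2j:\,j=0,1,\dots,n\}},\qquad\{\psi^{(n)}(u)^b_c\}_{b\in\{c-n+2j:\,j=0,1,\dots,n\}}$$ is a linearly independent subset of $(\mathbb{C}^2)^{\otimes n}$.
   Context: Fix $\alpha,s,t\in\mathbb{C}$. $\mathbb{C}^2$ has basis $e_1,e_2$; vectors are columns of coordinates. For integers $l$ define $\psi^{(1)}(u)^l_{l+1}=\begin{pmatrix}1\\ \alpha(u-l-t)\end{pmatrix}$, $\psi^{(1)}(u)^l_{l-1}=\begin{pmatrix}1\\ \alpha(u+l+s)\end{pmatrix}$, $\psi^{(1)}(u)^a_b=0$ if $|a-b|\neq1$. $\Pi_{1\ldots n}$ is the symmetrizer on $(\mathbb{C}^2)^{\otimes n}$, $\Pi_{1\ldots n}e_{i_1}\otimes\cdots\otimes e_{i_n}=\frac1{n!}\sum_{\sigma\in S_n}e_{i_{\sigma(1)}}\otimes\cdots\otimes e_{i_{\sigma(n)}}$. For $a,b\in\mathbb{Z}$ the fused intertwining vector is $\psi^{(n)}(u)^a_b=\Pi_{1\ldots n}\,\psi^{(1)}(u+n-1)^{c_0}_{c_1}\otimes\cdots\otimes\psi^{(1)}(u+1)^{c_{n-2}}_{c_{n-1}}\otimes\psi^{(1)}(u)^{c_{n-1}}_{c_n}$, with $c_0=a$, $c_n=b$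 and any integers $c_1,\dots,c_{n-1}$ with $|c_{i+1}-c_i|=1$ (the result does not depend on this choice); it is $0$ if $b-a\notin\{-n,-n+2,\dots,n\}$. *)

theory Defs
  imports Complex_Main "HOL-Combinatorics.Permutations"
begin

text \<open>A vector of C^2 is a pair (x, y), meaning the column (x; y) = x e1 + y e2.
  Component selection: False selects e1, True selects e2.\<close>
definition comp2 :: "complex \<times> complex \<Rightarrow> bool \<Rightarrow> complex" where
  "comp2 v i = (if i then snd v else fst v)"

text \<open>An element of the n-fold tensor power of C^2 is represented by its coordinate
  function on index words (bool lists of length n); it is 0 on words of other length.\<close>
type_synonym tensor = "bool list \<Rightarrow> complex"

definition tens :: "(complex \<times> complex) list \<Rightarrow> tensor" where
  "tens vs = (\<lambda>is. if length is = length vs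
       then (\<Prod>k<length vs. comp2 (vs ! k) (is ! k)) else 0)"

definition symmetrizer :: "nat \<Rightarrow> tensor \<Rightarrow> tensor" where
  "symmetrizer n T = (\<lambda>is. (1 / of_nat (fact n)) *
      (\<Sum>\<sigma>\<in>{\<sigma>. \<sigma> permutes {..<n}}. T (map (\<lambda>k. is ! \<sigma> k) [0..<length is])))"

definition psi1 :: "complex \<Rightarrow> complex \<Rightarrow> complex \<Rightarrow> complex \<Rightarrow> int \<Rightarrow> int \<Rightarrow> complex \<times> complex" where
  "psi1 \<alpha> s t u a b =
     (if b = a + 1 then (1, \<alpha> * (u - of_int a - t))
      else if b = a - 1 then (1, \<alpha> * (u + of_int a + s))
      else (0, 0))"

definition admissible_path :: "nat \<Rightarrow> int \<Rightarrow> int \<Rightarrow> (nat \<Rightarrow> int) \<Rightarrow> bool" where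
  "admissible_path n a b c \<longleftrightarrow> c 0 = a \<and> c n = b \<and> (\<forall>i<n. \<bar>c (Suc i) - c i\<bar> = 1)"

definition psi_path :: "complex \<Rightarrow> complex \<Rightarrow> complex \<Rightarrow> nat \<Rightarrow> complex \<Rightarrow> (nat \<Rightarrow> int) \<Rightarrow> tensor" where
  "psi_path \<alpha> s t n u c = symmetrizer n
     (tens (map (\<lambda>k. psi1 \<alpha> s t (u + of_nat (n - 1 - k)) (c k) (c (Suc k))) [0..<n]))"

definition psi_n :: "complex \<Rightarrow> complex \<Rightarrow> complex \<Rightarrow> nat \<Rightarrow> complex \<Rightarrow> int \<Rightarrow> int \<Rightarrow> tensor" where
  "psi_n \<alpha> s t n u a b =
     (if \<exists>c. admissible_path n a b c
      then psi_path \<alpha> s t n u (SOME c. admissible_path n a b c) else (\<lambda>_. 0))"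

end

theory Submission
  imports Defs
begin

definition Wt :: "nat \<Rightarrow> complex \<Rightarrow> complex \<Rightarrow> bool list \<Rightarrow> complex" where
  "Wt n p q is = (\<Prod>k<n. comp2 (p,q) (is!k))"
definition Lf :: "nat \<Rightarrow> complex \<Rightarrow> complex \<Rightarrow> tensor \<Rightarrow> complex" where
  "Lf n p q T = (\<Sum>is\<in>{is. length is = n}. T is * Wt n p q is)"

lemma sum_lists_prod:
  fixes g :: "nat \<Rightarrow> bool \<Rightarrow> complex"
  shows "(\<Sum>is\<in>{is::bool list. length is = n}. \<Prod>k<n. g k (is!k)) = (\<Prod>k<n. g k False + g k True)"
proof (induction n arbitrary: g)
  case 0
  have "{is::bool list. length is = 0} = {[]}" by auto
  then show ?case by simp
next
  case (Suc n)
  have S: "{is::bool list. length is = Suc n} = (\<lambda>(b,is). b#is) ` (UNIV \<times> {is. length is = n})"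
    by (auto simp: length_Suc_conv image_iff)
  have inj: "inj_on (\<lambda>(b,is). b#is) (UNIV \<times> {is::bool list. length is = n})" by (auto simp: inj_on_def)
  have "(\<Sum>is\<in>{is::bool list. length is = Suc n}. \<Prod>k<Suc n. g k (is!k))
      = (\<Sum>(b,is)\<in>UNIV \<times> {is::bool list. length is = n}. \<Prod>k<Suc n. g k ((b#is)!k))"
    unfolding S by (subst sum.reindex[OF inj]) (simp add: case_prod_unfold)
  also have "\<dots> = (\<Sum>b\<in>UNIV. \<Sum>is\<in>{is::bool list. length is = n}. g 0 b * (\<Prod>k<n. g (Suc k) (is!k)))"
    by (simp only: prod.lessThan_Suc_shift nth_Cons_0 nth_Cons_Suc sum.cartesian_product case_prod_unfold)
  also have "\<dots> = (\<Sum>b\<in>UNIV. g 0 b * (\<Prod>k<n. g (Suc k) False + g (Suc k) True))"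
    by (simp add: sum_distrib_left[symmetric] Suc.IH[of "\<lambda>k. g (Suc k)"])
  also have "\<dots> = (\<Prod>k<Suc n. g k False + g k True)"
    by (simp add: UNIV_bool prod.lessThan_Suc_shift algebra_simps del: prod.lessThan_Suc)
  finally show ?case .
qed

lemma Lf_tens: "length vs = n \<Longrightarrow> Lf n p q (tens vs) = (\<Prod>k<n. p * fst (vs!k) + q * snd (vs!k))"
proof -
  assume L: "length vs = n"
  have "Lf n p q (tens vs) = (\<Sum>is\<in>{is::bool list. length is = n}. \<Prod>k<n. comp2 (vs!k) (is!k) * comp2 (p,q) (is!k))"
    unfolding Lf_def Wt_def tens_def using L by (intro sum.cong) (auto simp: prod.distrib)
  also have "\<dots> = (\<Prod>k<n. p * fst (vs!k) + q * snd (vs!k))"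
    by (subst sum_lists_prod) (simp add: comp2_def algebra_simps)
  finally show ?thesis .
qed

lemma Lf_sym: "Lf n p q (symmetrizer n T) = Lf n p q T"
proof -
  let ?S = "{is::bool list. length is = n}"
  let ?P = "{\<sigma>. \<sigma> permutes {..<n}}"
  have perm: "(\<Sum>is\<in>?S. T (map (\<lambda>k. is ! \<sigma> k) [0..<n]) * Wt n p q is) = Lf n p q T"
    if sp: "\<sigma> permutes {..<n}" for \<sigma>
    unfolding Lf_def
  proof (rule sum.reindex_bij_witness[where i="\<lambda>is. map (\<lambda>k. is ! inv \<sigma> k) [0..<n]"
        and j="\<lambda>is. map (\<lambda>k. is ! \<sigma> k) [0..<n]"])
    have inr: "k < n \<Longrightarrow> \<sigma> k < n" "k < n \<Longrightarrow> inv \<sigma> k < n" for k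
      using sp permutes_in_image permutes_inv by (fastforce, fastforce)
    show "map (\<lambda>k. map (\<lambda>k. a ! \<sigma> k) [0..<n] ! inv \<sigma> k) [0..<n] = a" if "a \<in> ?S" for a
      using that inr by (auto simp: list_eq_iff_nth_eq permutes_inverses(1)[OF sp])
    show "map (\<lambda>k. map (\<lambda>k. a ! inv \<sigma> k) [0..<n] ! \<sigma> k) [0..<n] = a" if "a \<in> ?S" for a
      using that inr by (auto simp: list_eq_iff_nth_eq permutes_inverses(2)[OF sp])
    show "map (\<lambda>k. a ! \<sigma> k) [0..<n] \<in> ?S" for a by simp
    show "map (\<lambda>k. a ! inv \<sigma> k) [0..<n] \<in> ?S" for a by simp
    show "T (map (\<lambda>k. a ! \<sigma> k) [0..<n]) * Wt n p q (map (\<lambda>k. a ! \<sigma> k) [0..<n]) =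
          T (map (\<lambda>k. a ! \<sigma> k) [0..<n]) * Wt n p q a" if "a \<in> ?S" for a
    proof -
      have "Wt n p q (map (\<lambda>k. a ! \<sigma> k) [0..<n]) = (\<Prod>k<n. comp2 (p,q) (a ! \<sigma> k))"
        unfolding Wt_def by (intro prod.cong) auto
      also have "\<dots> = Wt n p q a" unfolding Wt_def
        using prod.permute[OF sp, of "\<lambda>k. comp2 (p,q) (a!k)"] by (simp add: comp_def)
      finally show ?thesis by simp
    qed
  qed
  have "Lf n p q (symmetrizer n T) = (\<Sum>is\<in>?S. (1 / of_nat (fact n)) *
      (\<Sum>\<sigma>\<in>?P. T (map (\<lambda>k. is ! \<sigma> k) [0..<n])) * Wt n p q is)"
    unfolding Lf_def symmetrizer_def by (intro sum.cong) auto
  also have "\<dots> = (1 / of_nat (fact n)) * (\<Sum>\<sigma>\<in>?P. \<Sum>is\<in>?S. T (map (\<lambda>k. is ! \<sigma> k) [0..<n]) * Wt n p q is)"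
    by (simp add: sum_distrib_left sum_distrib_right sum.swap[of _ ?P] mult.assoc)
  also have "\<dots> = (1 / of_nat (fact n)) * (\<Sum>\<sigma>\<in>?P. Lf n p q T)"
    using perm by simp
  also have "\<dots> = Lf n p q T"
    by (simp add: card_permutations)
  finally show ?thesis .
qed

lemma Lf_lin:
  assumes "\<forall>is. (\<Sum>j\<le>N. lam j * F j is) = 0"
  shows "(\<Sum>j\<le>N. lam j * Lf n p q (F j)) = 0"
proof -
  have "(\<Sum>j\<le>N. lam j * Lf n p q (F j)) = (\<Sum>is\<in>{is. length is = n}. (\<Sum>j\<le>N. lam j * F j is) * Wt n p q is)"
    unfolding Lf_def by (simp add: sum_distrib_left sum_distrib_right sum.swap[of _ "{..N}"] mult.assoc)
  also have "\<dots> = 0" using assms by simp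
  finally show ?thesis .
qed

lemma Lf_psi_path: "Lf n p q (psi_path \<alpha> s t n u c) =
   (\<Prod>k<n. p * fst (psi1 \<alpha> s t (u + of_nat (n-1-k)) (c k) (c (Suc k)))
          + q * snd (psi1 \<alpha> s t (u + of_nat (n-1-k)) (c k) (c (Suc k))))"
  unfolding psi_path_def Lf_sym by (subst Lf_tens) (auto intro!: prod.cong)

lemma path_prod:
  fixes y :: complex
  assumes al: "\<alpha> \<noteq> 0"
  shows "admissible_path n a b c \<Longrightarrow> \<exists>m\<le>n. b = a - int n + 2 * int m \<and>
   (\<Prod>k<n. y * fst (psi1 \<alpha> s t (u + of_nat (n-1-k)) (c k) (c (Suc k)))
          + (1/\<alpha>) * snd (psi1 \<alpha> s t (u + of_nat (n-1-k)) (c k) (c (Suc k))))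
   = (\<Prod>i<m. y + (u + of_nat n - 1 - of_int a - t) - 2 * of_nat i) *
     (\<Prod>i<n-m. y + (u + of_nat n - 1 + of_int a + s) - 2 * of_nat i)"
proof (induction n arbitrary: a c)
  case 0
  then show ?case by (auto simp: admissible_path_def)
next
  case (Suc n)
  let ?f = "\<lambda>n k. y * fst (psi1 \<alpha> s t (u + of_nat (n-1-k)) (c k) (c (Suc k)))
          + (1/\<alpha>) * snd (psi1 \<alpha> s t (u + of_nat (n-1-k)) (c k) (c (Suc k)))"
  have adm: "admissible_path n (c 1) b (c \<circ> Suc)" using Suc.prems by (auto simp: admissible_path_def)
  from Suc.IH[OF adm] obtain m where m: "m \<le> n" "b = c 1 - int n + 2 * int m"
    and P: "(\<Prod>k<n. y * fst (psi1 \<alpha> s t (u + of_nat (n-1-k)) ((c \<circ> Suc) k) ((c \<circ> Suc) (Suc k)))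
          + (1/\<alpha>) * snd (psi1 \<alpha> s t (u + of_nat (n-1-k)) ((c \<circ> Suc) k) ((c \<circ> Suc) (Suc k))))
   = (\<Prod>i<m. y + (u + of_nat n - 1 - of_int (c 1) - t) - 2 * of_nat i) *
     (\<Prod>i<n-m. y + (u + of_nat n - 1 + of_int (c 1) + s) - 2 * of_nat i)" by blast
  have c0: "c 0 = a" and st: "\<bar>c 1 - a\<bar> = 1" using Suc.prems by (auto simp: admissible_path_def)
  have split: "(\<Prod>k<Suc n. ?f (Suc n) k) = ?f (Suc n) 0 * (\<Prod>k<n. ?f (Suc n) (Suc k))"
    by (simp add: prod.lessThan_Suc_shift del: prod.lessThan_Suc)
  have P': "(\<Prod>k<n. ?f (Suc n) (Suc k)) = (\<Prod>i<m. y + (u + of_nat n - 1 - of_int (c 1) - t) - 2 * of_nat i) *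
     (\<Prod>i<n-m. y + (u + of_nat n - 1 + of_int (c 1) + s) - 2 * of_nat i)"
    using P by simp
  from st have "c 1 = a + 1 \<or> c 1 = a - 1" by auto
  then show ?case
  proof
    assume up: "c 1 = a + 1"
    have f0: "?f (Suc n) 0 = y + (u + of_nat (Suc n) - 1 - of_int a - t)"
      using c0 up al by (simp add: psi1_def field_simps)
    have e1: "(\<Prod>i<Suc m. y + (u + of_nat (Suc n) - 1 - of_int a - t) - 2 * of_nat i)
       = (y + (u + of_nat (Suc n) - 1 - of_int a - t)) * (\<Prod>i<m. y + (u + of_nat n - 1 - of_int (c 1) - t) - 2 * of_nat i)"
      unfolding prod.lessThan_Suc_shift up by (simp add: algebra_simps del: prod.lessThan_Suc)
    have e2: "(u + of_nat n - 1 + of_int (c 1) + s) = (u + of_nat (Suc n) - 1 + of_int a + s)"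
      using up by simp
    have "(\<Prod>k<Suc n. ?f (Suc n) k) = ?f (Suc n) 0 * (\<Prod>k<n. ?f (Suc n) (Suc k))" by (rule split)
    also have "\<dots> = (y + (u + of_nat (Suc n) - 1 - of_int a - t)) * ((\<Prod>i<m. y + (u + of_nat n - 1 - of_int (c 1) - t) - 2 * of_nat i) *
     (\<Prod>i<n-m. y + (u + of_nat n - 1 + of_int (c 1) + s) - 2 * of_nat i))" by (simp only: f0 P')
    also have "\<dots> = (\<Prod>i<Suc m. y + (u + of_nat (Suc n) - 1 - of_int a - t) - 2 * of_nat i) *
     (\<Prod>i<Suc n - Suc m. y + (u + of_nat (Suc n) - 1 + of_int a + s) - 2 * of_nat i)"
      unfolding e1 e2 diff_Suc_Suc by (simp only: mult.assoc)
    finally show ?case using m up by (intro exI[of _ "Suc m"]) auto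
  next
    assume dn: "c 1 = a - 1"
    have f0: "?f (Suc n) 0 = y + (u + of_nat (Suc n) - 1 + of_int a + s)"
      using c0 dn al by (simp add: psi1_def field_simps)
    have e1: "(\<Prod>i<Suc (n-m). y + (u + of_nat (Suc n) - 1 + of_int a + s) - 2 * of_nat i)
       = (y + (u + of_nat (Suc n) - 1 + of_int a + s)) * (\<Prod>i<n-m. y + (u + of_nat n - 1 + of_int (c 1) + s) - 2 * of_nat i)"
      unfolding prod.lessThan_Suc_shift dn by (simp add: algebra_simps del: prod.lessThan_Suc)
    have e2: "(u + of_nat n - 1 - of_int (c 1) - t) = (u + of_nat (Suc n) - 1 - of_int a - t)"
      using dn by simp
    have e3: "Suc n - m = Suc (n - m)" using m by simp
    have "(\<Prod>k<Suc n. ?f (Suc n) k) = ?f (Suc n) 0 * (\<Prod>k<n. ?f (Suc n) (Suc k))" by (rule split)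
    also have "\<dots> = (y + (u + of_nat (Suc n) - 1 + of_int a + s)) * ((\<Prod>i<m. y + (u + of_nat n - 1 - of_int (c 1) - t) - 2 * of_nat i) *
     (\<Prod>i<n-m. y + (u + of_nat n - 1 + of_int (c 1) + s) - 2 * of_nat i))" by (simp only: f0 P')
    also have "\<dots> = (\<Prod>i<m. y + (u + of_nat (Suc n) - 1 - of_int a - t) - 2 * of_nat i) *
     (\<Prod>i<Suc n - m. y + (u + of_nat (Suc n) - 1 + of_int a + s) - 2 * of_nat i)"
      unfolding e3 e1 e2 by (simp only: mult.assoc mult.left_commute)
    finally show ?case using m dn by (intro exI[of _ m]) auto
  qed
qed

lemma path_exists: "j \<le> n \<Longrightarrow> \<exists>c. admissible_path n a (a - int n + 2 * int j) c"
  by (rule exI[of _ "\<lambda>k. if k \<le> j then a + int k else a + 2 * int j - int k"])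
     (auto simp: admissible_path_def)

lemma Lf_psi_n:
  fixes y :: complex
  assumes al: "\<alpha> \<noteq> 0" and ex: "\<exists>c. admissible_path n a b c"
  shows "\<exists>m\<le>n. b = a - int n + 2 * int m \<and> Lf n y (1/\<alpha>) (psi_n \<alpha> s t n u a b)
   = (\<Prod>i<m. y + (u + of_nat n - 1 - of_int a - t) - 2 * of_nat i) *
     (\<Prod>i<n-m. y + (u + of_nat n - 1 + of_int a + s) - 2 * of_nat i)"
proof -
  let ?c = "SOME c. admissible_path n a b c"
  have adm: "admissible_path n a b ?c" using someI_ex[OF ex] .
  have "psi_n \<alpha> s t n u a b = psi_path \<alpha> s t n u ?c" using ex by (simp add: psi_n_def)
  then show ?thesis using path_prod[OF al adm, where y=y and u=u] by (simp add: Lf_psi_path)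
qed

lemma prod_rev: "(\<Prod>i<l. y + Z - 2 * of_nat i) = (\<Prod>i<l. y + (Z - 2 * of_nat l + 2) + 2 * (of_nat i :: complex))"
proof (induction l)
  case 0 then show ?case by simp
next
  case (Suc l)
  have "(\<Prod>i<Suc l. y + (Z - 2 * of_nat (Suc l) + 2) + 2 * (of_nat i :: complex))
     = (y + Z - 2 * of_nat l) * (\<Prod>i<l. y + (Z - 2 * of_nat l + 2) + 2 * (of_nat i :: complex))"
    by (simp add: prod.lessThan_Suc_shift algebra_simps del: prod.lessThan_Suc)
  then show ?case using Suc.IH by (simp add: mult.commute)
qed

lemma indep:
  fixes X Y \<delta> :: complex and lam :: "nat \<Rightarrow> complex"
  assumes \<delta>: "\<delta> \<noteq> 0" and XY: "(X - Y)/\<delta> \<notin> \<int>"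
  and H: "\<And>y. (\<Sum>j\<le>n. lam j * ((\<Prod>i<j. y + X + \<delta> * of_nat i) * (\<Prod>i<n-j. y + Y + \<delta> * of_nat i))) = 0"
  shows "\<forall>j\<le>n. lam j = 0"
proof -
  have key: "lam (n - k) = 0" if "k \<le> n" for k
    using that
  proof (induction k rule: less_induct)
    case (less k)
    define y where "y = - Y - \<delta> * of_nat k"
    let ?Q = "\<lambda>j. lam j * ((\<Prod>i<j. y + X + \<delta> * of_nat i) * (\<Prod>i<n-j. y + Y + \<delta> * of_nat i))"
    have zero: "?Q j = 0" if "j \<le> n" "j \<noteq> n - k" for j
    proof (cases "j > n - k")
      case True
      then have "lam (n - (n - j)) = 0" using less.IH[of "n - j"] that less.prems by auto
      then show ?thesis using that by simp
    next
      case False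
      then have "k < n - j" using that less.prems by auto
      then have "(\<Prod>i<n-j. y + Y + \<delta> * of_nat i) = 0"
        by (auto simp: y_def prod_zero_iff intro!: bexI[of _ k])
      then show ?thesis by simp
    qed
    have "(\<Sum>j\<le>n. ?Q j) = ?Q (n - k) + (\<Sum>j\<in>{..n} - {n-k}. ?Q j)"
      by (subst sum.remove[of _ "n - k"]) auto
    also have "(\<Sum>j\<in>{..n} - {n-k}. ?Q j) = 0" using zero by (intro sum.neutral) auto
    finally have eq: "?Q (n - k) = 0" using H[of y] by simp
    have nz1: "(\<Prod>i<n-k. y + X + \<delta> * of_nat i) \<noteq> 0"
    proof
      assume "(\<Prod>i<n-k. y + X + \<delta> * of_nat i) = 0"
      then obtain i where "y + X + \<delta> * of_nat i = 0" by (auto simp: prod_zero_iff)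
      then have "X - Y = \<delta> * (of_nat k - of_nat i)" by (simp add: y_def algebra_simps)
      then have "(X - Y)/\<delta> = of_int (int k - int i)" using \<delta> by simp
      then show False using XY by (metis Ints_of_int)
    qed
    have nz2: "(\<Prod>i<n-(n-k). y + Y + \<delta> * of_nat i) \<noteq> 0"
    proof
      assume "(\<Prod>i<n-(n-k). y + Y + \<delta> * of_nat i) = 0"
      then obtain i where "i < k" "y + Y + \<delta> * of_nat i = 0" using less.prems by (auto simp: prod_zero_iff)
      then have "\<delta> * (of_nat i - of_nat k) = 0" by (simp add: y_def algebra_simps)
      then show False using \<delta> \<open>i < k\<close> by simp
    qed
    show ?case using eq nz1 nz2 by simp
  qed
  show ?thesis
  proof (intro allI impI)
    fix j assume "j \<le> n"
    then show "lam j = 0" using key[of "n - j"] by simp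
  qed
qed

lemma case1:
  fixes \<alpha> s t :: complex
  assumes al: "\<alpha> \<noteq> 0" and w: "(s + t) / 2 \<notin> \<int>"
  and H: "\<forall>is. (\<Sum>j\<le>n. lam j * psi_n \<alpha> s t n u a (a - int n + 2 * int j) is) = 0"
  shows "\<forall>j\<le>n. lam j = 0"
proof -
  define A where "A = u + of_nat n - 1 - of_int a - t"
  define C where "C = u + of_nat n - 1 + of_int a + s"
  have Q: "Lf n y (1/\<alpha>) (psi_n \<alpha> s t n u a (a - int n + 2 * int j))
      = (\<Prod>i<j. y + A + (-2) * of_nat i) * (\<Prod>i<n-j. y + C + (-2) * of_nat i)" if "j \<le> n" for j y
  proof -
    from Lf_psi_n[OF al path_exists[OF that], where y=y and s=s and t=t and u=u] obtain m where
      "m \<le> n" "a - int n + 2 * int j = a - int n + 2 * int m"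
      "Lf n y (1/\<alpha>) (psi_n \<alpha> s t n u a (a - int n + 2 * int j))
   = (\<Prod>i<m. y + (u + of_nat n - 1 - of_int a - t) - 2 * of_nat i) *
     (\<Prod>i<n-m. y + (u + of_nat n - 1 + of_int a + s) - 2 * of_nat i)" by blast
    then show ?thesis by (simp add: A_def C_def algebra_simps)
  qed
  have Z: "(\<Sum>j\<le>n. lam j * ((\<Prod>i<j. y + A + (-2) * of_nat i) * (\<Prod>i<n-j. y + C + (-2) * of_nat i))) = 0" for y
  proof -
    have "(\<Sum>j\<le>n. lam j * Lf n y (1/\<alpha>) (psi_n \<alpha> s t n u a (a - int n + 2 * int j))) = 0"
      by (rule Lf_lin[OF H])
    moreover have "(\<Sum>j\<le>n. lam j * Lf n y (1/\<alpha>) (psi_n \<alpha> s t n u a (a - int n + 2 * int j))) = (\<Sum>j\<le>n. lam j * ((\<Prod>i<j. y + A + (-2) * of_nat i) * (\<Prod>i<n-j. y + C + (-2) * of_nat i)))"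
      by (intro sum.cong refl) (simp add: Q)
    ultimately show ?thesis by simp
  qed
  have "(A - C) / (-2) = of_int a + (s + t) / 2" by (simp add: A_def C_def field_simps)
  moreover have "of_int a + (s + t) / 2 \<notin> \<int>"
  proof
    assume "of_int a + (s + t) / 2 \<in> \<int>"
    then have "(of_int a + (s + t) / 2) - of_int a \<in> \<int>" by (intro Ints_diff) auto
    then show False using w by simp
  qed
  ultimately have "(A - C) / (-2) \<notin> \<int>" by metis
  from indep[where \<delta>="-2", OF _ this Z] show ?thesis by simp
qed

lemma case2:
  fixes \<alpha> s t :: complex
  assumes al: "\<alpha> \<noteq> 0" and w: "(s + t) / 2 \<notin> \<int>"
  and H: "\<forall>is. (\<Sum>j\<le>n. lam j * psi_n \<alpha> s t n u (c - int n + 2 * int j) c is) = 0"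
  shows "\<forall>j\<le>n. lam j = 0"
proof -
  define P where "P = u + 1 - of_int c - t"
  define R where "R = u + 1 + of_int c + s"
  have Q: "Lf n y (1/\<alpha>) (psi_n \<alpha> s t n u (c - int n + 2 * int j) c)
      = (\<Prod>i<j. y + R + 2 * of_nat i) * (\<Prod>i<n-j. y + P + 2 * of_nat i)" if j: "j \<le> n" for j y
  proof -
    let ?b = "c - int n + 2 * int j"
    have e: "?b - int n + 2 * int (n - j) = c" using j by simp
    have ex: "\<exists>p. admissible_path n ?b c p" using path_exists[of "n - j" n ?b] e by simp
    from Lf_psi_n[OF al ex, where y=y and s=s and t=t and u=u] obtain m where
      m: "m \<le> n" "c = ?b - int n + 2 * int m" and
      L: "Lf n y (1/\<alpha>) (psi_n \<alpha> s t n u ?b c)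
   = (\<Prod>i<m. y + (u + of_nat n - 1 - of_int ?b - t) - 2 * of_nat i) *
     (\<Prod>i<n-m. y + (u + of_nat n - 1 + of_int ?b + s) - 2 * of_nat i)" by blast
    have mj: "m = n - j" using m j by simp
    have nm': "n - (n - j) = j" using j by simp
    have e1: "(u + of_nat n - 1 - of_int ?b - t) - 2 * of_nat (n - j) + 2 = P"
      using j by (simp add: P_def of_nat_diff algebra_simps)
    have e2: "(u + of_nat n - 1 + of_int ?b + s) - 2 * of_nat j + 2 = R"
      by (simp add: R_def algebra_simps)
    have "Lf n y (1/\<alpha>) (psi_n \<alpha> s t n u ?b c) = (\<Prod>i<n-j. y + (u + of_nat n - 1 - of_int ?b - t) - 2 * of_nat i) *
     (\<Prod>i<j. y + (u + of_nat n - 1 + of_int ?b + s) - 2 * of_nat i)" unfolding L mj nm' ..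
    also have "\<dots> = (\<Prod>i<n-j. y + P + 2 * of_nat i) * (\<Prod>i<j. y + R + 2 * of_nat i)"
      by (subst (1 2) prod_rev) (simp only: e1 e2)
    finally show ?thesis by (simp only: mult.commute)
  qed
  have Z: "(\<Sum>j\<le>n. lam j * ((\<Prod>i<j. y + R + 2 * of_nat i) * (\<Prod>i<n-j. y + P + 2 * of_nat i))) = 0" for y
  proof -
    have "(\<Sum>j\<le>n. lam j * Lf n y (1/\<alpha>) (psi_n \<alpha> s t n u (c - int n + 2 * int j) c)) = 0"
      by (rule Lf_lin[OF H])
    moreover have "(\<Sum>j\<le>n. lam j * Lf n y (1/\<alpha>) (psi_n \<alpha> s t n u (c - int n + 2 * int j) c)) = (\<Sum>j\<le>n. lam j * ((\<Prod>i<j. y + R + 2 * of_nat i) * (\<Prod>i<n-j. y + P + 2 * of_nat i)))"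
      by (intro sum.cong refl) (simp add: Q)
    ultimately show ?thesis by simp
  qed
  have "(R - P) / 2 = of_int c + (s + t) / 2" by (simp add: R_def P_def field_simps)
  moreover have "of_int c + (s + t) / 2 \<notin> \<int>"
  proof
    assume "of_int c + (s + t) / 2 \<in> \<int>"
    then have "(of_int c + (s + t) / 2) - of_int c \<in> \<int>" by (intro Ints_diff) auto
    then show False using w by simp
  qed
  ultimately have "(R - P) / 2 \<notin> \<int>" by metis
  from indep[where \<delta>="2", OF _ this Z] show ?thesis by simp
qed

theorem proposition6:
  fixes \<alpha> s t :: complex
  assumes "\<alpha> \<noteq> 0" and "(s + t) / 2 \<notin> \<int>"
  shows "\<forall>n::nat. n > 0 \<longrightarrow> (\<forall>(u::complex) (a::int) (c::int).
     (\<forall>lam::nat \<Rightarrow> complex.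
        (\<forall>is. (\<Sum>j\<le>n. lam j * psi_n \<alpha> s t n u a (a - int n + 2 * int j) is) = 0)
        \<longrightarrow> (\<forall>j\<le>n. lam j = 0)) \<and>
     (\<forall>lam::nat \<Rightarrow> complex.
        (\<forall>is. (\<Sum>j\<le>n. lam j * psi_n \<alpha> s t n u (c - int n + 2 * int j) c is) = 0)
        \<longrightarrow> (\<forall>j\<le>n. lam j = 0)))"
  using case1[OF assms] case2[OF assms] by blast

end
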